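(* (1) Every symmetric intersecting family is balanceable. (2) There exists a family (of subsets of some finite set) that is uniform and balanceable but not regular (and hence not symmetric). (3) There exists a family that is uniform, regular and intersecting but not balanceable.
   Context: Let $P$ be a finite set with $|P|=n$ (identified with $[n]$). A family $\mathcal{F}=(F_1,\dots,F_m)$ of subsets of $P$ is: intersecting if any two of its sets intersect; regular if every element of $P$ lies in the same number of sets of $\mathcal{F}$; uniform if all its sets have the same size; symmetric if for any $p,q\in P$ there is a bijection $\varphi:P\to P$ with $\varphi(p)=q$ and $\{\varphi(A):A\in\mathcal{F}\}=\mathcal{F}$; balanceable if there exist $w\in[0,1]^m$ with $\sum_i w_i=1$ and $s\in[0,1]^{m\times m\times n}$ with $\sum_p s_{ijp}=1$ for all $i,j$, such that (intersecting system) $s_{ijp}>0$ implies $p\in F_i\cap F_j$ for all $i,j,p$, and (balanced) $\sum_{i=1}^m\sum_{j=1}^m w_iw_js_{ijp}=1/n$ for all $p\in P$. *)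

theory Defs
  imports Complex_Main
begin

text \<open>Ground set P = {0..<n} (identified with [n]); a family F_1,...,F_m is a list
  of subsets of P (repetitions allowed), F_i = F ! (i-1).\<close>

definition family_on :: "nat \<Rightarrow> nat set list \<Rightarrow> bool" where
  "family_on n F \<longleftrightarrow> (\<forall>A \<in> set F. A \<subseteq> {..<n})"

definition intersecting :: "nat set list \<Rightarrow> bool" where
  "intersecting F \<longleftrightarrow> (\<forall>i<length F. \<forall>j<length F. F ! i \<inter> F ! j \<noteq> {})"

definition regular :: "nat \<Rightarrow> nat set list \<Rightarrow> bool" where
  "regular n F \<longleftrightarrow> (\<exists>k. \<forall>p<n. card {i. i < length F \<and> p \<in> F ! i} = k)"

definition uniform :: "nat set list \<Rightarrow> bool" where
  "uniform F \<longleftrightarrow> (\<exists>k. \<forall>i<length F. card (F ! i) = k)"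

definition symmetric :: "nat \<Rightarrow> nat set list \<Rightarrow> bool" where
  "symmetric n F \<longleftrightarrow> (\<forall>p<n. \<forall>q<n. \<exists>\<phi>. bij_betw \<phi> {..<n} {..<n} \<and> \<phi> p = q \<and>
      (\<lambda>A. \<phi> ` A) ` set F = set F)"

definition balanceable :: "nat \<Rightarrow> nat set list \<Rightarrow> bool" where
  "balanceable n F \<longleftrightarrow> (let m = length F in
    \<exists>(w :: nat \<Rightarrow> real) (s :: nat \<Rightarrow> nat \<Rightarrow> nat \<Rightarrow> real).
      (\<forall>i<m. 0 \<le> w i \<and> w i \<le> 1) \<and> (\<Sum>i<m. w i) = 1 \<and>
      (\<forall>i<m. \<forall>j<m. \<forall>p<n. 0 \<le> s i j p \<and> s i j p \<le> 1) \<and>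
      (\<forall>i<m. \<forall>j<m. (\<Sum>p<n. s i j p) = 1) \<and>
      (\<forall>i<m. \<forall>j<m. \<forall>p<n. s i j p > 0 \<longrightarrow> p \<in> F ! i \<inter> F ! j) \<and>
      (\<forall>p<n. (\<Sum>i<m. \<Sum>j<m. w i * w j * s i j p) = 1 / real n))"

end

theory Submission
  imports Defs "HOL-Combinatorics.Permutations"
begin

definition autG :: "nat \<Rightarrow> nat set set \<Rightarrow> (nat \<Rightarrow> nat) set" where
  "autG n S = {g. g permutes {..<n} \<and> (\<lambda>A. g ` A) ` S = S}"

lemma autG_id: "id \<in> autG n S"
  unfolding autG_def by simp

lemma autG_finite: "finite (autG n S)"
  unfolding autG_def
  by (rule finite_subset[OF _ finite_permutations[of "{..<n}"]]) auto

lemma autG_comp: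
  assumes "g \<in> autG n S" "h \<in> autG n S"
  shows "g \<circ> h \<in> autG n S"
proof -
  have "(\<lambda>A. (g \<circ> h) ` A) ` S = (\<lambda>A. g ` A) ` ((\<lambda>A. h ` A) ` S)"
    by (simp add: image_comp o_def)
  also have "\<dots> = S" using assms unfolding autG_def by simp
  finally show ?thesis using assms unfolding autG_def by (auto intro: permutes_compose)
qed

lemma autG_inv:
  assumes "h \<in> autG n S"
  shows "inv h \<in> autG n S"
proof -
  have hp: "h permutes {..<n}" and hS: "(\<lambda>A. h ` A) ` S = S" using assms unfolding autG_def by auto
  have inj: "inj h" using hp by (rule permutes_inj)
  have "(\<lambda>A. inv h ` A) ` S = (\<lambda>A. inv h ` A) ` ((\<lambda>A. h ` A) ` S)" using hS by simp
  also have "\<dots> = (\<lambda>A. inv h ` h ` A) ` S" by (simp add: image_comp o_def)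
  also have "\<dots> = S" using inj by (simp add: image_inv_f_f)
  finally show ?thesis using permutes_inv[OF hp] unfolding autG_def by auto
qed

lemma autG_reindex:
  assumes "h \<in> autG n S"
  shows "(\<Sum>g\<in>autG n S. f (g \<circ> h)) = (\<Sum>g\<in>autG n S. f g)"
proof -
  have hp: "h permutes {..<n}" using assms unfolding autG_def by auto
  have bij: "bij_betw (\<lambda>g. g \<circ> h) (autG n S) (autG n S)"
  proof (rule bij_betw_imageI)
    show "inj_on (\<lambda>g. g \<circ> h) (autG n S)"
    proof (rule inj_onI)
      fix g1 g2 assume "g1 \<circ> h = g2 \<circ> h"
      then have "g1 \<circ> h \<circ> inv h = g2 \<circ> h \<circ> inv h" by simp
      then show "g1 = g2" using permutes_inv_o(1)[OF hp] by (simp add: o_assoc[symmetric])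
    qed
    show "(\<lambda>g. g \<circ> h) ` autG n S = autG n S"
    proof
      show "(\<lambda>g. g \<circ> h) ` autG n S \<subseteq> autG n S" using autG_comp[OF _ assms] by auto
      show "autG n S \<subseteq> (\<lambda>g. g \<circ> h) ` autG n S"
      proof
        fix g assume g: "g \<in> autG n S"
        have "g = (g \<circ> inv h) \<circ> h" using permutes_inv_o(2)[OF hp] by (simp add: o_assoc[symmetric])
        moreover have "g \<circ> inv h \<in> autG n S" using autG_comp[OF g autG_inv[OF assms]] .
        ultimately show "g \<in> (\<lambda>g. g \<circ> h) ` autG n S" by blast
      qed
    qed
  qed
  show ?thesis using sum.reindex_bij_betw[OF bij, of f] by simp
qed

lemma autG_img_bij:
  assumes "g \<in> autG n S"
  shows "bij_betw (\<lambda>A. g ` A) S S"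
proof -
  have "inj g" using assms unfolding autG_def by (auto intro: permutes_inj)
  then have "inj_on (\<lambda>A. g ` A) S" by (auto intro!: inj_onI simp: inj_image_eq_iff)
  moreover have "(\<lambda>A. g ` A) ` S = S" using assms unfolding autG_def by auto
  ultimately show ?thesis by (simp add: bij_betw_def)
qed

lemma group_weights:
  fixes F :: "nat set list" and f :: "nat set \<Rightarrow> real"
  assumes k: "k = card (set F)"
  shows "(\<Sum>i<length F. (1 / (real k * real (card {j. j < length F \<and> F ! j = F ! i}))) * f (F ! i))
         = (\<Sum>A\<in>set F. f A) / real k"
proof -
  let ?h = "\<lambda>i. (1 / (real k * real (card {j. j < length F \<and> F ! j = F ! i}))) * f (F ! i)"
  have img: "(\<lambda>i. F ! i) ` {..<length F} = set F" by (auto simp: in_set_conv_nth)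
  have "(\<Sum>i<length F. ?h i) = (\<Sum>A\<in>(\<lambda>i. F ! i) ` {..<length F}. \<Sum>i\<in>{i. i \<in> {..<length F} \<and> F ! i = A}. ?h i)"
    by (rule sum.image_gen) simp
  also have "\<dots> = (\<Sum>A\<in>set F. f A / real k)"
    unfolding img
  proof (rule sum.cong[OF refl])
    fix A assume A: "A \<in> set F"
    define M where "M = {j. j < length F \<and> F ! j = A}"
    have M: "{i. i \<in> {..<length F} \<and> F ! i = A} = M" unfolding M_def by auto
    have finM: "finite M" unfolding M_def by simp
    have "M \<noteq> {}" using A unfolding M_def by (auto simp: in_set_conv_nth)
    then have cM: "card M > 0" using finM by (simp add: card_gt_0_iff)
    have "(\<Sum>i\<in>M. ?h i) = (\<Sum>i\<in>M. (1 / (real k * real (card M))) * f A)"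
      by (rule sum.cong[OF refl]) (simp add: M_def)
    also have "\<dots> = real (card M) * ((1 / (real k * real (card M))) * f A)" by simp
    also have "\<dots> = f A / real k" using cM by (simp add: field_simps)
    finally show "(\<Sum>i\<in>{i. i \<in> {..<length F} \<and> F ! i = A}. ?h i) = f A / real k" unfolding M .
  qed
  also have "\<dots> = (\<Sum>A\<in>set F. f A) / real k" by (simp add: sum_divide_distrib)
  finally show ?thesis .
qed


lemma part1:
  assumes fam: "family_on n F" and ne: "F \<noteq> []" and sym: "symmetric n F" and int: "intersecting F"
  shows "balanceable n F"
proof -
  define m where "m = length F"
  define S where "S = set F"
  define k where "k = card S"
  define G where "G = autG n S"
  define c :: "nat set \<Rightarrow> nat set \<Rightarrow> nat" where "c = (\<lambda>A B. SOME p. p \<in> A \<inter> B)"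
  define t0 :: "nat set \<Rightarrow> nat set \<Rightarrow> nat \<Rightarrow> real" where "t0 = (\<lambda>A B q. if q = c A B then 1 else 0)"
  define t :: "nat set \<Rightarrow> nat set \<Rightarrow> nat \<Rightarrow> real"
    where "t = (\<lambda>A B p. (\<Sum>g\<in>G. t0 (g ` A) (g ` B) (g p)) / real (card G))"
  define mu0 where "mu0 = (\<lambda>q. \<Sum>A\<in>S. \<Sum>B\<in>S. t0 A B q)"
  define mu where "mu = (\<lambda>p. \<Sum>A\<in>S. \<Sum>B\<in>S. t A B p)"
  define w :: "nat \<Rightarrow> real" where "w = (\<lambda>i. 1 / (real k * real (card {j. j < m \<and> F ! j = F ! i})))"
  define s where "s = (\<lambda>i j p. t (F ! i) (F ! j) p)"
  have finS: "finite S" unfolding S_def by simp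
  have Sne: "S \<noteq> {}" unfolding S_def using ne by simp
  have kpos: "k > 0" unfolding k_def using finS Sne by (simp add: card_gt_0_iff)
  have Ssub: "A \<subseteq> {..<n}" if "A \<in> S" for A
    using fam that unfolding family_on_def S_def by blast
  have Sint: "A \<inter> B \<noteq> {}" if "A \<in> S" "B \<in> S" for A B
    using int that unfolding intersecting_def S_def by (metis in_set_conv_nth)
  have finG: "finite G" unfolding G_def by (rule autG_finite)
  have idG: "id \<in> G" unfolding G_def by (rule autG_id)
  have Gpos: "card G > 0" using finG idG by (auto simp: card_gt_0_iff)
  have Gperm: "g permutes {..<n}" if "g \<in> G" for g using that unfolding G_def autG_def by auto
  have Gimg: "g ` A \<in> S" if "g \<in> G" "A \<in> S" for g A
    using that unfolding G_def autG_def by blast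
  have cmem: "c A B \<in> A \<inter> B" if "A \<in> S" "B \<in> S" for A B
    unfolding c_def using Sint[OF that] by (metis (no_types, lifting) all_not_in_conv someI_ex)
  have cn: "c A B \<in> {..<n}" if "A \<in> S" "B \<in> S" for A B
    using cmem[OF that] Ssub[OF that(1)] by blast
  have t0_nonneg: "t0 A B q \<ge> 0" for A B q unfolding t0_def by simp
  have t_nonneg: "t A B p \<ge> 0" for A B p
    unfolding t_def by (intro divide_nonneg_nonneg sum_nonneg t0_nonneg) simp
  have t_sum: "(\<Sum>p<n. t A B p) = 1" if AB: "A \<in> S" "B \<in> S" for A B
  proof -
    have inner: "(\<Sum>p<n. t0 (g ` A) (g ` B) (g p)) = 1" if g: "g \<in> G" for g
    proof -
      have "(\<Sum>p<n. t0 (g ` A) (g ` B) (g p)) = (\<Sum>q<n. t0 (g ` A) (g ` B) q)"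
        using sum.permute[OF Gperm[OF g], of "t0 (g ` A) (g ` B)"] by (simp add: o_def)
      also have "\<dots> = 1" unfolding t0_def using cn[OF Gimg[OF g AB(1)] Gimg[OF g AB(2)]]
        by (simp add: sum.delta')
      finally show ?thesis .
    qed
    have "(\<Sum>p<n. t A B p) = (\<Sum>p<n. \<Sum>g\<in>G. t0 (g ` A) (g ` B) (g p)) / real (card G)"
      unfolding t_def by (simp add: sum_divide_distrib)
    also have "\<dots> = (\<Sum>g\<in>G. \<Sum>p<n. t0 (g ` A) (g ` B) (g p)) / real (card G)"
      by (simp add: sum.swap[of _ G])
    also have "\<dots> = (\<Sum>g\<in>G. (1::real)) / real (card G)" using inner by simp
    also have "\<dots> = 1" using Gpos by simp
    finally show ?thesis .
  qed
  have t_le1: "t A B p \<le> 1" if "A \<in> S" "B \<in> S" "p < n" for A B p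
  proof -
    have "t A B p \<le> (\<Sum>p<n. t A B p)"
      by (rule member_le_sum) (use that t_nonneg in auto)
    then show ?thesis using t_sum[OF that(1,2)] by simp
  qed
  have t_supp: "p \<in> A \<inter> B" if AB: "A \<in> S" "B \<in> S" and pos: "t A B p > 0" for A B p
  proof -
    have "(\<Sum>g\<in>G. t0 (g ` A) (g ` B) (g p)) \<noteq> 0" using pos unfolding t_def by auto
    then obtain g where g: "g \<in> G" and "t0 (g ` A) (g ` B) (g p) \<noteq> 0" by (meson sum.neutral)
    then have "g p = c (g ` A) (g ` B)" unfolding t0_def by (auto split: if_splits)
    then have "g p \<in> g ` A \<inter> g ` B" using cmem[OF Gimg[OF g AB(1)] Gimg[OF g AB(2)]] by simp
    moreover have "inj g" using Gperm[OF g] by (rule permutes_inj)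
    ultimately show ?thesis by (simp add: inj_image_mem_iff)
  qed
  have mu_eq: "mu p = (\<Sum>g\<in>G. mu0 (g p)) / real (card G)" for p
  proof -
    have "mu p = (\<Sum>A\<in>S. \<Sum>B\<in>S. \<Sum>g\<in>G. t0 (g ` A) (g ` B) (g p)) / real (card G)"
      unfolding mu_def t_def by (simp add: sum_divide_distrib)
    also have "(\<Sum>A\<in>S. \<Sum>B\<in>S. \<Sum>g\<in>G. t0 (g ` A) (g ` B) (g p))
             = (\<Sum>g\<in>G. \<Sum>A\<in>S. \<Sum>B\<in>S. t0 (g ` A) (g ` B) (g p))"
      by (simp add: sum.swap[of _ G])
    also have "\<dots> = (\<Sum>g\<in>G. mu0 (g p))"
    proof (rule sum.cong[OF refl])
      fix g assume g: "g \<in> G"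
      have bij: "bij_betw (\<lambda>A. g ` A) S S" using g unfolding G_def by (rule autG_img_bij)
      have "(\<Sum>A\<in>S. \<Sum>B\<in>S. t0 (g ` A) (g ` B) (g p)) = (\<Sum>A\<in>S. \<Sum>B\<in>S. t0 (g ` A) B (g p))"
      proof (rule sum.cong[OF refl])
        fix A
        show "(\<Sum>B\<in>S. t0 (g ` A) (g ` B) (g p)) = (\<Sum>B\<in>S. t0 (g ` A) B (g p))"
          using sum.reindex_bij_betw[OF bij, of "\<lambda>B. t0 (g ` A) B (g p)"] by simp
      qed
      also have "\<dots> = (\<Sum>A\<in>S. \<Sum>B\<in>S. t0 A B (g p))"
        using sum.reindex_bij_betw[OF bij, of "\<lambda>A. \<Sum>B\<in>S. t0 A B (g p)"] by simp
      finally show "(\<Sum>A\<in>S. \<Sum>B\<in>S. t0 (g ` A) (g ` B) (g p)) = mu0 (g p)" unfolding mu0_def .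
    qed
    finally show ?thesis .
  qed
  have mu_inv: "mu (h p) = mu p" if h: "h \<in> G" for h p
  proof -
    have "(\<Sum>g\<in>G. mu0 (g (h p))) = (\<Sum>g\<in>G. (\<lambda>f. mu0 (f p)) (g \<circ> h))" by simp
    also have "\<dots> = (\<Sum>g\<in>G. mu0 (g p))" using h unfolding G_def by (rule autG_reindex)
    finally show ?thesis unfolding mu_eq by simp
  qed
  have trans: "\<exists>h\<in>G. h p = q" if "p < n" "q < n" for p q
  proof -
    have "\<exists>\<phi>. bij_betw \<phi> {..<n} {..<n} \<and> \<phi> p = q \<and> (\<lambda>A. \<phi> ` A) ` set F = set F"
      using sym[unfolded symmetric_def, rule_format, OF that] .
    then obtain \<phi> where phi: "bij_betw \<phi> {..<n} {..<n}" "\<phi> p = q" "(\<lambda>A. \<phi> ` A) ` set F = set F"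
      by (elim exE conjE) (rule that)
    define h where "h = (\<lambda>x. if x < n then \<phi> x else x)"
    have "bij_betw h {..<n} {..<n}" using phi(1) by (rule bij_betw_cong[THEN iffD1, rotated]) (simp add: h_def)
    then have hp: "h permutes {..<n}" by (rule bij_imp_permutes) (simp add: h_def)
    have "h ` A = \<phi> ` A" if "A \<in> S" for A using Ssub[OF that] by (auto simp: h_def)
    then have "(\<lambda>A. h ` A) ` S = (\<lambda>A. \<phi> ` A) ` S" by (rule image_cong[OF refl])
    then have "(\<lambda>A. h ` A) ` S = S" using phi(3) unfolding S_def by simp
    then have "h \<in> G" using hp unfolding G_def autG_def by simp
    moreover have "h p = q" using phi(2) that by (simp add: h_def)
    ultimately show ?thesis by blast
  qed
  obtain A0 where A0: "A0 \<in> S" using Sne by blast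
  have npos: "n > 0" using Sint[OF A0 A0] Ssub[OF A0] by auto
  have mu_const: "mu p = mu 0" if pn: "p < n" for p
  proof -
    obtain h where "h \<in> G" "h 0 = p" using trans[OF npos pn] by blast
    then show ?thesis using mu_inv[of h 0] by simp
  qed
  have mu_total: "(\<Sum>p<n. mu p) = real k * real k"
  proof -
    have "(\<Sum>p<n. mu p) = (\<Sum>A\<in>S. \<Sum>B\<in>S. \<Sum>p<n. t A B p)"
      unfolding mu_def by (simp add: sum.swap[of _ "{..<n}"])
    also have "\<dots> = (\<Sum>A\<in>S. \<Sum>B\<in>S. (1::real))" using t_sum by simp
    also have "\<dots> = real k * real k" unfolding k_def by simp
    finally show ?thesis .
  qed
  have mu_val: "mu p = real k * real k / real n" if "p < n" for p
  proof -
    have "(\<Sum>p<n. mu p) = (\<Sum>p<n. mu 0)"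
    proof (rule sum.cong[OF refl])
      fix p assume "p \<in> {..<n}"
      then show "mu p = mu 0" using mu_const by blast
    qed
    then have "real n * mu 0 = real k * real k" using mu_total by simp
    then show ?thesis using mu_const[OF that] npos by (simp add: field_simps)
  qed
  have gw: "(\<Sum>i<m. w i * f (F ! i)) = (\<Sum>A\<in>S. f A) / real k" for f
    using group_weights[of k F f] unfolding w_def m_def k_def S_def by simp
  have FiS: "F ! i \<in> S" if "i < m" for i using that unfolding S_def m_def by simp
  have w_nonneg: "0 \<le> w i" for i unfolding w_def by simp
  have w_le1: "w i \<le> 1" if "i < m" for i
  proof -
    define C where "C = {j. j < m \<and> F ! j = F ! i}"
    have "i \<in> C" using that unfolding C_def by simp
    moreover have "finite C" unfolding C_def by simp
    ultimately have "card C > 0" using card_gt_0_iff by blast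
    then have c1: "real (card C) \<ge> 1" by simp
    have k1: "real k \<ge> 1" using kpos by simp
    have "1 * 1 \<le> real k * real (card C)" by (rule mult_mono) (use c1 k1 in auto)
    then show ?thesis unfolding w_def C_def[symmetric] by simp
  qed
  have w_sum: "(\<Sum>i<m. w i) = 1"
    using gw[of "\<lambda>_. 1"] kpos unfolding k_def by simp
  have bal: "(\<Sum>i<m. \<Sum>j<m. w i * w j * s i j p) = 1 / real n" if "p < n" for p
  proof -
    have "(\<Sum>i<m. \<Sum>j<m. w i * w j * s i j p) = (\<Sum>i<m. w i * (\<Sum>j<m. w j * t (F ! i) (F ! j) p))"
      unfolding s_def by (simp add: sum_distrib_left mult.assoc)
    also have "\<dots> = (\<Sum>i<m. w i * ((\<Sum>B\<in>S. t (F ! i) B p) / real k))"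
    proof (rule sum.cong[OF refl])
      fix i
      show "w i * (\<Sum>j<m. w j * t (F ! i) (F ! j) p) = w i * ((\<Sum>B\<in>S. t (F ! i) B p) / real k)"
        using gw[of "\<lambda>B. t (F ! i) B p"] by simp
    qed
    also have "\<dots> = (\<Sum>A\<in>S. (\<Sum>B\<in>S. t A B p) / real k) / real k"
      by (rule gw[of "\<lambda>A. (\<Sum>B\<in>S. t A B p) / real k"])
    also have "\<dots> = mu p / (real k * real k)"
      unfolding mu_def by (simp add: sum_divide_distrib)
    also have "\<dots> = 1 / real n" using mu_val[OF that] kpos by simp
    finally show ?thesis .
  qed
  show ?thesis
    unfolding balanceable_def Let_def m_def[symmetric]
    apply (rule exI[of _ w], rule exI[of _ s])
    apply (intro conjI allI impI)
    subgoal using w_nonneg by blast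
    subgoal using w_le1 by blast
    subgoal using w_sum by blast
    subgoal unfolding s_def using t_nonneg by blast
    subgoal unfolding s_def using t_le1 FiS by blast
    subgoal unfolding s_def using t_sum FiS by blast
    subgoal unfolding s_def using t_supp FiS by blast
    subgoal using bal by blast
    done
qed

lemma part2: "\<exists>n F. family_on n F \<and> uniform F \<and> balanceable n F \<and> \<not> regular n F \<and> \<not> symmetric n F"
proof -
  define F :: "nat set list" where "F = [{0,1,2},{0,1,3},{0,2,3}]"
  have fam: "family_on 4 F" unfolding family_on_def F_def by auto
  have uni: "uniform F" unfolding uniform_def F_def
    by (rule exI[of _ 3]) (auto simp: less_Suc_eq nth_Cons')
  have c0: "{i. i < length F \<and> 0 \<in> F ! i} = {0,1,2}"
    unfolding F_def by (auto simp: less_Suc_eq nth_Cons')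
  have c1: "{i. i < length F \<and> 1 \<in> F ! i} = {0,1}"
    unfolding F_def by (auto simp: less_Suc_eq nth_Cons')
  have nreg: "\<not> regular 4 F"
  proof
    assume "regular 4 F"
    then obtain k where k: "\<forall>p<4. card {i. i < length F \<and> p \<in> F ! i} = k" unfolding regular_def by blast
    have l: "(0::nat) < 4" "(1::nat) < 4" by simp_all
    note a = k[rule_format, OF l(1)] and b = k[rule_format, OF l(2)]
    from a b
    have "card {i. i < length F \<and> 0 \<in> F ! i} = card {i. i < length F \<and> 1 \<in> F ! i}" by simp
    then show False unfolding c0 c1 by simp
  qed
  have nsym: "\<not> symmetric 4 F"
  proof
    assume "symmetric 4 F"
    then have "\<exists>\<phi>. bij_betw \<phi> {..<4} {..<4} \<and> \<phi> 0 = 1 \<and> (\<lambda>A. \<phi> ` A) ` set F = set F"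
      unfolding symmetric_def by (metis zero_less_numeral one_less_numeral_iff semiring_norm(76))
    then obtain \<phi> where ph: "\<phi> 0 = 1" "(\<lambda>A. \<phi> ` A) ` set F = set F"
      by blast
    have "{0,2,3} \<in> set F" unfolding F_def by simp
    then have "{0,2,3} \<in> (\<lambda>A. \<phi> ` A) ` set F" using ph(2) by simp
    then obtain A where "A \<in> set F" "{0,2,3} = \<phi> ` A" by blast
    moreover have "0 \<in> A" using \<open>A \<in> set F\<close> unfolding F_def by auto
    ultimately have "(1::nat) \<in> {0,2,3}" using ph(1) by (metis imageI)
    then show False by simp
  qed
  define w :: "nat \<Rightarrow> real" where "w = (\<lambda>i. 1/3)"
  define s :: "nat \<Rightarrow> nat \<Rightarrow> nat \<Rightarrow> real" where
    "s = (\<lambda>i j p. if i = j then (if p = 0 then 3/4 else if p = [1,3,2] ! i then 1/4 else 0)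
            else if p = [0,1,2,3] ! (i + j) then 1 else 0)"
  have e3: "{..<3::nat} = {0,1,2}" and e4: "{..<4::nat} = {0,1,2,3}" by auto
  have q3: "\<And>P. (\<forall>i<3::nat. P i) \<longleftrightarrow> P 0 \<and> P 1 \<and> P 2"
    by (auto simp: less_Suc_eq numeral_eq_Suc)
  have q4: "\<And>P. (\<forall>i<4::nat. P i) \<longleftrightarrow> P 0 \<and> P 1 \<and> P 2 \<and> P 3"
    by (auto simp: less_Suc_eq numeral_eq_Suc)
  have lenF: "length F = 3" unfolding F_def by simp
  have bal: "balanceable 4 F"
    unfolding balanceable_def Let_def lenF
    apply (rule exI[of _ w], rule exI[of _ s])
    unfolding q3 q4 e3 e4
    unfolding F_def w_def s_def
    apply (simp add: nth_Cons')
    done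
  show ?thesis using fam uni bal nreg nsym by blast
qed

lemma filt_ins: "{i \<in> insert a A. P i} = (if P a then insert a {i\<in>A. P i} else {i\<in>A. P i})" by auto

lemma all_lt_num: "(\<forall>i<(numeral k::nat). P i) \<longleftrightarrow> (\<forall>i<pred_numeral k. P i) \<and> P (pred_numeral k)"
  by (simp add: numeral_eq_Suc less_Suc_eq) blast

lemma sq_contra:
  fixes x y :: real
  assumes "x \<ge> 0" "y \<ge> 0" "x + y = 1" "3/10 \<le> x * x" "3/10 \<le> y * y"
  shows False
proof (cases "x \<le> 1/2")
  case True
  then have "x * x \<le> (1/2) * (1/2)" using assms(1) by (intro mult_mono) auto
  then show False using assms(4) by simp
next
  case False
  then have "y \<le> 1/2" using assms(3) by simp
  then have "y * y \<le> (1/2) * (1/2)" using assms(2) by (intro mult_mono) auto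
  then show False using assms(5) by simp
qed

lemma part3: "\<exists>n F. family_on n F \<and> F \<noteq> [] \<and> uniform F \<and> regular n F \<and> intersecting F
              \<and> \<not> balanceable n F"
proof -
  define F :: "nat set list" where "F = [{0,1,2,6,7},{0,1,2,8,9},{3,4,5,6,8},{3,4,5,7,9}]"
  have lenF: "length F = 4" unfolding F_def by simp
  have q4: "\<And>P. (\<forall>i<4::nat. P i) \<longleftrightarrow> P 0 \<and> P 1 \<and> P 2 \<and> P 3"
    by (simp add: all_lt_num conj_ac)
  have q10: "\<And>P. (\<forall>i<10::nat. P i) \<longleftrightarrow> P 0 \<and> P 1 \<and> P 2 \<and> P 3 \<and> P 4 \<and> P 5 \<and> P 6 \<and> P 7 \<and> P 8 \<and> P 9"
    by (simp add: all_lt_num conj_ac)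
  have e4: "{..<4::nat} = {0,1,2,3}" by (simp add: lessThan_nat_numeral lessThan_Suc insert_commute)
  have e10: "{..<10::nat} = {0,1,2,3,4,5,6,7,8,9}" by (simp add: lessThan_nat_numeral lessThan_Suc insert_commute)
  have c4: "\<And>P. {i::nat. i < 4 \<and> P i} = {i \<in> {0,1,2,3}. P i}" by auto
  have fam: "family_on 10 F" unfolding family_on_def F_def by auto
  have ne: "F \<noteq> []" unfolding F_def by simp
  have uni: "uniform F" unfolding uniform_def lenF
    by (rule exI[of _ 5], unfold q4, unfold F_def) simp
  have reg: "regular 10 F" unfolding regular_def lenF
    by (rule exI[of _ 2], unfold q10 c4, simp only: filt_ins, unfold F_def) (simp add: nth_Cons')
  have int: "intersecting F" unfolding intersecting_def lenF q4 unfolding F_def by simp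
  have nbal: "\<not> balanceable 10 F"
  proof
    assume "balanceable 10 F"
    then obtain w :: "nat \<Rightarrow> real" and s where
      w0: "\<forall>i<4. 0 \<le> w i \<and> w i \<le> 1" and w1: "(\<Sum>i<4. w i) = 1" and
      s0: "\<forall>i<4. \<forall>j<4. \<forall>p<10. 0 \<le> s i j p \<and> s i j p \<le> 1" and
      s1: "\<forall>i<4. \<forall>j<4. (\<Sum>p<10. s i j p) = 1" and
      s2: "\<forall>i<4. \<forall>j<4. \<forall>p<10. s i j p > 0 \<longrightarrow> p \<in> F ! i \<inter> F ! j" and
      b: "\<forall>p<10. (\<Sum>i<4. \<Sum>j<4. w i * w j * s i j p) = 1 / real 10"
      unfolding balanceable_def Let_def lenF by (elim exE conjE) (rule that; assumption)
    have z: "s i j p = 0" if "i < 4" "j < 4" "p < 10" "p \<notin> F ! i \<inter> F ! j" for i j p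
    proof -
      have "0 \<le> s i j p" using s0 that by blast
      moreover have "\<not> s i j p > 0" using s2 that by blast
      ultimately show ?thesis by linarith
    qed
    have T1: "s i j 0 + s i j 1 + s i j 2 \<le> 1" and T2: "s i j 3 + s i j 4 + s i j 5 \<le> 1"
      if "i < 4" "j < 4" for i j
    proof -
      have "\<forall>p<10. 0 \<le> s i j p" using s0 that by blast
      then have nn: "0 \<le> s i j 0" "0 \<le> s i j 1" "0 \<le> s i j 2" "0 \<le> s i j 3" "0 \<le> s i j 4"
        "0 \<le> s i j 5" "0 \<le> s i j 6" "0 \<le> s i j 7" "0 \<le> s i j 8" "0 \<le> s i j 9"
        unfolding q10 by blast+
      have "(\<Sum>p<10. s i j p) = 1" using s1 that by blast
      then have "s i j 0 + s i j 1 + s i j 2 + s i j 3 + s i j 4 + s i j 5 + s i j 6 + s i j 7 + s i j 8 + s i j 9 = 1"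
        unfolding e10 by simp
      then show "s i j 0 + s i j 1 + s i j 2 \<le> 1" "s i j 3 + s i j 4 + s i j 5 \<le> 1"
        using nn by linarith+
    qed
    have wn: "0 \<le> w 0" "0 \<le> w 1" "0 \<le> w 2" "0 \<le> w 3" using w0 unfolding q4 by blast+
    have wsum: "w 0 + w 1 + w 2 + w 3 = 1" using w1 unfolding e4 by simp
    have bp: "\<And>p. p < 10 \<Longrightarrow> (\<Sum>i\<in>{0,1,2,3}. \<Sum>j\<in>{0,1,2,3}. w i * w j * s i j p) = 1/10"
      using b unfolding e4 by simp
    have bU: "w 0 * w 0 * s 0 0 p + w 0 * w 1 * s 0 1 p + w 1 * w 0 * s 1 0 p + w 1 * w 1 * s 1 1 p = 1/10"
      if "p \<in> {0,1,2}" for p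
    proof -
      have "p < 10" using that by auto
      from bp[OF this] show ?thesis using that
        by (auto simp: z F_def)
    qed
    have bV: "w 2 * w 2 * s 2 2 p + w 2 * w 3 * s 2 3 p + w 3 * w 2 * s 3 2 p + w 3 * w 3 * s 3 3 p = 1/10"
      if "p \<in> {3,4,5}" for p
    proof -
      have "p < 10" using that by auto
      from bp[OF this] show ?thesis using that
        by (auto simp: z F_def)
    qed
    have le1: "w i * w j * s i j a + w i * w j * s i j b + w i * w j * s i j c \<le> w i * w j"
      if "i < 4" "j < 4" "s i j a + s i j b + s i j c \<le> 1" for i j a b c
    proof -
      have "0 \<le> w i * w j" using w0 that by simp
      have "w i * w j * (s i j a + s i j b + s i j c) \<le> w i * w j * 1"
        by (rule mult_left_mono[OF that(3) \<open>0 \<le> w i * w j\<close>])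
      then show ?thesis by (simp add: distrib_left)
    qed
    have "3/10 \<le> (w 0 + w 1) * (w 0 + w 1)"
      using bU[of 0] bU[of 1] bU[of 2] le1[OF _ _ T1, of 0 0] le1[OF _ _ T1, of 0 1]
        le1[OF _ _ T1, of 1 0] le1[OF _ _ T1, of 1 1]
      by (simp add: algebra_simps)
    moreover have "3/10 \<le> (w 2 + w 3) * (w 2 + w 3)"
      using bV[of 3] bV[of 4] bV[of 5] le1[OF _ _ T2, of 2 2] le1[OF _ _ T2, of 2 3]
        le1[OF _ _ T2, of 3 2] le1[OF _ _ T2, of 3 3]
      by (simp add: algebra_simps)
    ultimately show False using sq_contra[of "w 0 + w 1" "w 2 + w 3"] wn wsum by linarith
  qed
  show ?thesis using fam ne uni reg int nbal by blast
qed

theorem theorem5: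
  shows "(\<forall>n F. family_on n F \<and> F \<noteq> [] \<and> symmetric n F \<and> intersecting F
              \<longrightarrow> balanceable n F)
       \<and> (\<exists>n F. family_on n F \<and> uniform F \<and> balanceable n F \<and> \<not> regular n F
              \<and> \<not> symmetric n F)
       \<and> (\<exists>n F. family_on n F \<and> F \<noteq> [] \<and> uniform F \<and> regular n F \<and> intersecting F
              \<and> \<not> balanceable n F)"
  using part1 part2 part3 by blast

end
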